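(* Let $N, s \in \mathbb{N}$ with $\gcd(N, s) = 1$, let $s'$ be the unique integer in $[1,N-1]$ with $s s'\equiv 1 \pmod N$, let $H<P$ be natural numbers, let $\tilde{P}$ be the unique integer in $[0,s-1]$ with $\tilde P\equiv P \pmod s$, and let $g(x)=x+c\in\mathbb{Z}[x]$ where $c$ is the unique integer in $[0,N-1]$ congruent to $s' + s'(P - \tilde{P})$ modulo $N$. Let $r,m,d \in \mathbb{N}$ be arbitrary, and define $f_0, \dots, f_{d-1} \in \mathbb{Z}[x]$ by \[ f_i(x) = \begin{cases} N^{m - \lfloor i/r \rfloor}g(x)^i, & 0 \le i < rm, \\ g(x)^i, & rm \le i < d. \end{cases} \] Let $p_0 \in [P-H, P+H]$ be an integer with $p_0>1$, $p_0^r\mid N$ and $p_0\equiv 1 \pmod s$; write $p_0=sx_0+1$ and let $x' = x_0 - \frac{P - \tilde{P}}{s}$. Then $p_0^{rm} \mid f_i(x')$ for all $0 \leq i < d$. *)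

theory Defs
  imports "HOL-Computational_Algebra.Polynomial" "HOL-Number_Theory.Cong"
begin

definition g_poly :: "int \<Rightarrow> int poly" where
  "g_poly c = [:c, 1:]"

definition f_poly :: "nat \<Rightarrow> nat \<Rightarrow> nat \<Rightarrow> int \<Rightarrow> nat \<Rightarrow> int poly" where
  "f_poly N r m c i =
     (if i < r * m then smult (int N ^ (m - i div r)) (g_poly c ^ i)
      else g_poly c ^ i)"

end

theory Submission
  imports Defs
begin

theorem claim3p4:
  fixes N s H P r m d :: nat
    and s' Pt c p0 x0 :: int
  assumes coprime: "gcd N s = 1"
    and s'_range: "1 \<le> s'" "s' \<le> int N - 1"
    and s'_inv: "[int s * s' = 1] (mod int N)"
    and HP: "H < P"
    and Pt_range: "0 \<le> Pt" "Pt \<le> int s - 1"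
    and Pt_cong: "[Pt = int P] (mod int s)"
    and c_range: "0 \<le> c" "c \<le> int N - 1"
    and c_cong: "[c = s' + s' * (int P - Pt)] (mod int N)"
    and p0_range: "int P - int H \<le> p0" "p0 \<le> int P + int H"
    and p0_gt: "p0 > 1"
    and p0_dvd: "p0 ^ r dvd int N"
    and p0_cong: "[p0 = 1] (mod int s)"
    and x0_def: "p0 = int s * x0 + 1"
  shows "\<forall>i<d. p0 ^ (r * m) dvd
           poly (f_poly N r m c i) (x0 - (int P - Pt) div int s)"
proof (cases "r = 0")
  case True
  then show ?thesis by simp
next
  case False
  define y where "y = x0 - (int P - Pt) div int s"
  obtain k where k: "int P - Pt = int s * k"
  proof -
    have "int s dvd int P - Pt" using Pt_cong cong_sym cong_iff_dvd_diff by blast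
    then show ?thesis using that by (elim dvdE) blast
  qed
  have yk: "y = x0 - k"
  proof (cases "s = 0")
    case True
    then show ?thesis using k Pt_range by simp
  next
    case False
    then show ?thesis unfolding y_def using k by simp
  qed
  have sc: "[int s * c = int s * (s' + s' * (int P - Pt))] (mod int N)"
    using c_cong by (simp add: cong_scalar_left)
  have eqA: "int s * (s' + s' * (int P - Pt)) = (int s * s') * (1 + (int P - Pt))"
    by (simp add: algebra_simps)
  have sc1: "[(int s * s') * (1 + (int P - Pt)) = 1 + (int P - Pt)] (mod int N)"
    using cong_mult[OF s'_inv cong_refl] by simp
  have "[int s * (s' + s' * (int P - Pt)) = 1 + (int P - Pt)] (mod int N)"
    by (subst eqA) (rule sc1)
  from cong_trans[OF sc this] have sc2: "[int s * c = 1 + (int P - Pt)] (mod int N)" .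
  have eq: "int s * (y + c) = p0 - 1 - (int P - Pt) + int s * c"
    by (simp only: yk x0_def k) (simp add: algebra_simps)
  have "[p0 - 1 - (int P - Pt) + int s * c = p0 - 1 - (int P - Pt) + (1 + (int P - Pt))] (mod int N)"
    using cong_add[OF cong_refl[of "p0 - 1 - (int P - Pt)"] sc2] .
  then have key: "[int s * (y + c) = p0] (mod int N)" using eq by simp
  have pN: "p0 dvd int N" using dvd_trans[OF dvd_power[of r p0] p0_dvd] False by simp
  have kp: "[int s * (y + c) = p0] (mod p0)" using cong_dvd_modulus[OF key pN] .
  then have "p0 dvd int s * (y + c)"
    using cong_dvd_iff[OF kp] by simp
  moreover have "coprime p0 (int s)"
  proof (rule coprimeI)
    fix e assume e1: "e dvd p0" and e2: "e dvd int s"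
    then have "e dvd int s * x0" by simp
    then have "e dvd 1" using e1 x0_def by (simp add: dvd_add_right_iff)
    then show "is_unit e" by simp
  qed
  ultimately have pg0: "p0 dvd int s * (y + c) \<and> coprime p0 (int s)" by simp
  note cc = coprime_dvd_mult_right_iff[OF \<open>coprime p0 (int s)\<close>, of "y + c"]
  have pg: "p0 dvd (y + c)" using pg0 cc by simp
  have gpoly: "poly (g_poly c) y = y + c" by (simp add: g_poly_def)
  show ?thesis unfolding y_def[symmetric]
  proof (intro allI impI)
    fix i assume "i < d"
    show "p0 ^ (r * m) dvd poly (f_poly N r m c i) y"
    proof (cases "i < r * m")
      case True
      have A: "p0 ^ (r * (m - i div r)) dvd int N ^ (m - i div r)"
        using p0_dvd by (simp add: power_mult dvd_power_same)
      have B: "p0 ^ i dvd (y + c) ^ i" using pg by (simp add: dvd_power_same)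
      have "i div r \<le> m" using True False
        div_less_iff_less_mult[of r i m] by (simp add: mult.commute)
      moreover have "r * (i div r) \<le> i" by (simp add: mult.commute)
      moreover have "r * (m - i div r) = r * m - r * (i div r)" by (simp add: diff_mult_distrib2)
      moreover have "r * (i div r) \<le> r * m" using \<open>i div r \<le> m\<close> by simp
      ultimately have le: "r * m \<le> r * (m - i div r) + i" by linarith
      have "p0 ^ (r * m) dvd p0 ^ (r * (m - i div r) + i)"
        using le by (simp add: le_imp_power_dvd)
      also have "\<dots> dvd int N ^ (m - i div r) * (y + c) ^ i"
        using A B by (simp add: power_add mult_dvd_mono)
      finally show ?thesis using True by (simp add: f_poly_def gpoly poly_power)
    next
      case False
      have "p0 ^ (r * m) dvd p0 ^ i" using False by (simp add: le_imp_power_dvd)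
      also have "\<dots> dvd (y + c) ^ i" using pg by (simp add: dvd_power_same)
      finally show ?thesis using False by (simp add: f_poly_def gpoly poly_power)
    qed
  qed
qed

end
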